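(* Suppose the weight sequence $\mathbf{w}$ has type II or III. Then there is a sequence $t_n\to0$ such that $\Pr{\tilde D_n\le(1-\mu+t_n)n}\to1$ as $n\to\infty$; that is, $\tilde D_n\le(1-\mu+o(1))n$ with probability tending to $1$.
   Context: A weight sequence $\mathbf{w}=(\omega_k)_{k\ge0}$ consists of non-negative reals with $\omega_0>0$ and $\omega_k>0$ for some $k\ge2$; $\mathcal{T}_n$ is the random plane tree with $n$ vertices drawn with probability proportional to $\prod_v\omega_{d^+(v)}$ ($n\equiv1\bmod\gcd\{i:\omega_i>0\}$), with root $o$. Let $\phi(z)=\sum_k\omega_kz^k$ with radius $\rho_\phi$, $\psi(t)=t\phi'(t)/\phi(t)$, $\nu=\lim_{t\nearrow\rho_\phi}\psi(t)$ when $\rho_\phi>0$. Type II: $\rho_\phi>0$, $0<\nu<1$, $\tau=\rho_\phi$. Type III: $\rho_\phi=0$, $\tau=\nu=0$. $\xi$ has law $\Pr{\xi=k}=\tau^k\omega_k/\phi(\tau)$, and $\mu=\mathbb{E}\xi=\min(\nu,1)$ (so $\mu=\nu$ in types II/III). Let $N_k$ be the number of vertices of $\mathcal{T}_n$ with outdegree $k$. $(\Omega_n)$ is a fixed deterministic sequence with $\Omega_n\to\infty$, $\Omega_n=o(n)$, such that for every $K_n\to\infty$ with $K_n\le\Omega_n$: $\sum_{k\le K_n}kN_k=\mu n+o_p(n)$ and $\sum_{k>K_n}kN_k=(1-\mu)n+o_p(n)$. $\tilde D_n$ is a random integer with the law of $d^+_{\mathcal{T}_n}(o)$ conditioned on $d^+_{\mathcal{T}_n}(o)>\Omega_n$.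 *)

theory Defs
  imports "HOL-Analysis.Analysis"
begin

datatype ptree = Node "ptree list"

fun nverts :: "ptree \<Rightarrow> nat" where
  "nverts (Node ts) = 1 + sum_list (map nverts ts)"

fun rootdeg :: "ptree \<Rightarrow> nat" where
  "rootdeg (Node ts) = length ts"

fun twt :: "(nat \<Rightarrow> real) \<Rightarrow> ptree \<Rightarrow> real" where
  "twt \<omega> (Node ts) = \<omega> (length ts) * prod_list (map (twt \<omega>) ts)"

fun Ncount :: "nat \<Rightarrow> ptree \<Rightarrow> nat" where
  "Ncount k (Node ts) = (if length ts = k then 1 else 0) + sum_list (map (Ncount k) ts)"

definition ptrees :: "nat \<Rightarrow> ptree set" where
  "ptrees n = {T. nverts T = n}"

definition tprob :: "(nat \<Rightarrow> real) \<Rightarrow> nat \<Rightarrow> (ptree \<Rightarrow> bool) \<Rightarrow> real" where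
  "tprob \<omega> n P = (\<Sum>T\<in>{T\<in>ptrees n. P T}. twt \<omega> T) / (\<Sum>T\<in>ptrees n. twt \<omega> T)"

definition weight_seq :: "(nat \<Rightarrow> real) \<Rightarrow> bool" where
  "weight_seq \<omega> \<longleftrightarrow> (\<forall>k. 0 \<le> \<omega> k) \<and> 0 < \<omega> 0 \<and> (\<exists>k\<ge>2. 0 < \<omega> k)"

definition wspan :: "(nat \<Rightarrow> real) \<Rightarrow> nat" where
  "wspan \<omega> = Gcd {i. 0 < \<omega> i}"

definition gen_phi :: "(nat \<Rightarrow> real) \<Rightarrow> real \<Rightarrow> real" where
  "gen_phi \<omega> t = (\<Sum>k. \<omega> k * t ^ k)"

definition gen_psi :: "(nat \<Rightarrow> real) \<Rightarrow> real \<Rightarrow> real" where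
  "gen_psi \<omega> t = t * deriv (gen_phi \<omega>) t / gen_phi \<omega> t"

definition rho_phi :: "(nat \<Rightarrow> real) \<Rightarrow> ereal" where
  "rho_phi \<omega> = conv_radius \<omega>"

definition typeII_nu :: "(nat \<Rightarrow> real) \<Rightarrow> real \<Rightarrow> bool" where
  "typeII_nu \<omega> \<nu> \<longleftrightarrow> 0 < rho_phi \<omega> \<and> rho_phi \<omega> < \<infinity> \<and>
     (gen_psi \<omega> \<longlongrightarrow> \<nu>) (at_left (real_of_ereal (rho_phi \<omega>))) \<and> 0 < \<nu> \<and> \<nu> < 1"

definition typeIII :: "(nat \<Rightarrow> real) \<Rightarrow> bool" where
  "typeIII \<omega> \<longleftrightarrow> rho_phi \<omega> = 0"

end

theory Submission
  imports Defs
begin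

lemma nverts_pos: "nverts T \<ge> 1"
  by (cases T) auto

fun valid :: "ptree \<Rightarrow> nat list \<Rightarrow> bool" where
  "valid (Node ts) [] = True"
| "valid (Node ts) (i#p) = (i < length ts \<and> valid (ts!i) p)"

fun sub :: "ptree \<Rightarrow> nat list \<Rightarrow> ptree" where
  "sub (Node ts) [] = Node ts"
| "sub (Node ts) (i#p) = sub (ts!i) p"

fun repl :: "ptree \<Rightarrow> nat list \<Rightarrow> ptree \<Rightarrow> ptree" where
  "repl (Node ts) [] S = S"
| "repl (Node ts) (i#p) S = Node (ts[i := repl (ts!i) p S])"

definition pos :: "ptree \<Rightarrow> nat list set" where
  "pos T = {p. valid T p}"

lemma valid_Nil[simp]: "valid T []" by (cases T) auto
lemma sub_Nil[simp]: "sub T [] = T" by (cases T) auto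
lemma repl_Nil[simp]: "repl T [] S = S" by (cases T) auto

lemma pos_Node: "pos (Node ts) = insert [] (\<Union>i<length ts. (Cons i) ` pos (ts!i))"
proof -
  have "p \<in> pos (Node ts) \<longleftrightarrow> p \<in> insert [] (\<Union>i<length ts. (Cons i) ` pos (ts!i))" for p
    by (cases p) (auto simp: pos_def)
  thus ?thesis by blast
qed

lemma sum_list_upd:
  fixes xs :: "'a::comm_monoid_add list"
  shows "i < length xs \<Longrightarrow> sum_list (xs[i:=x]) + xs!i = sum_list xs + x"
proof (induction xs arbitrary: i)
  case Nil then show ?case by simp
next
  case (Cons a xs) then show ?case by (cases i) (auto simp: algebra_simps)
qed

lemma prod_list_upd:
  fixes xs :: "'a::comm_monoid_mult list"
  shows "i < length xs \<Longrightarrow> prod_list (xs[i:=x]) * xs!i = prod_list xs * x"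
proof (induction xs arbitrary: i)
  case Nil then show ?case by simp
next
  case (Cons a xs) then show ?case by (cases i) (auto simp: algebra_simps)
qed

lemma pos_finite_card: "finite (pos T) \<and> card (pos T) = nverts T"
proof (induction T)
  case (Node ts)
  have fin: "finite ((Cons i) ` pos (ts!i))" if "i < length ts" for i
    using Node that by auto
  have disj: "\<forall>i\<in>{..<length ts}. \<forall>j\<in>{..<length ts}. i \<noteq> j \<longrightarrow>
      (Cons i) ` pos (ts!i) \<inter> (Cons j) ` pos (ts!j) = {}" by auto
  have c: "card (\<Union>i<length ts. (Cons i) ` pos (ts!i)) = (\<Sum>i<length ts. card ((Cons i) ` pos (ts!i)))"
    by (rule card_UN_disjoint) (use fin disj in auto)
  have c2: "card ((Cons i) ` pos (ts!i)) = nverts (ts!i)" if "i < length ts" for i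
    using Node that by (subst card_image) (auto simp: inj_on_def)
  have "sum_list (map nverts ts) = (\<Sum>i<length ts. nverts (ts!i))"
    by (simp add: sum_list_sum_nth atLeast0LessThan)
  moreover have "[] \<notin> (\<Union>i<length ts. (Cons i) ` pos (ts!i))" by auto
  ultimately show ?case using c c2 fin
    by (simp add: pos_Node card_insert_if)
qed

lemma pos_finite[simp]: "finite (pos T)" using pos_finite_card by blast
lemma card_pos: "card (pos T) = nverts T" using pos_finite_card by blast

lemma Ncount_card: "Ncount k T = card {p\<in>pos T. rootdeg (sub T p) = k}"
proof (induction T)
  case (Node ts)
  have e: "{p\<in>pos (Node ts). rootdeg (sub (Node ts) p) = k} =
     (if length ts = k then {[]} else {}) \<union>
     (\<Union>i<length ts. (Cons i) ` {p\<in>pos (ts!i). rootdeg (sub (ts!i) p) = k})"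
    by (auto simp: pos_Node)
  have fin: "finite ((Cons i) ` {p\<in>pos (ts!i). rootdeg (sub (ts!i) p) = k})" for i by auto
  have c: "card (\<Union>i<length ts. (Cons i) ` {p\<in>pos (ts!i). rootdeg (sub (ts!i) p) = k}) =
     (\<Sum>i<length ts. card ((Cons i) ` {p\<in>pos (ts!i). rootdeg (sub (ts!i) p) = k}))"
    by (rule card_UN_disjoint) (use fin in auto)
  have c2: "card ((Cons i) ` {p\<in>pos (ts!i). rootdeg (sub (ts!i) p) = k}) = Ncount k (ts!i)"
    if "i < length ts" for i
    using Node that by (subst card_image) (auto simp: inj_on_def)
  have "sum_list (map (Ncount k) ts) = (\<Sum>i<length ts. Ncount k (ts!i))"
    by (simp add: sum_list_sum_nth atLeast0LessThan)
  moreover have "[] \<notin> (\<Union>i<length ts. (Cons i) ` {p\<in>pos (ts!i). rootdeg (sub (ts!i) p) = k})" by auto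
  ultimately show ?case unfolding e using c c2 fin
    by (auto simp: card_insert_if)
qed

lemma valid_repl: "valid T p \<Longrightarrow> valid (repl T p S) (p @ q) = valid S q"
proof (induction p arbitrary: T)
  case Nil then show ?case by simp
next
  case (Cons i p) then show ?case by (cases T) auto
qed

lemma sub_repl: "valid T p \<Longrightarrow> sub (repl T p S) (p @ q) = sub S q"
proof (induction p arbitrary: T)
  case Nil then show ?case by simp
next
  case (Cons i p) then show ?case by (cases T) auto
qed

lemma repl_repl: "valid T p \<Longrightarrow> repl (repl T p S) p S' = repl T p S'"
proof (induction p arbitrary: T)
  case Nil then show ?case by simp
next
  case (Cons i p) then show ?case by (cases T) auto
qed

lemma repl_sub: "valid T p \<Longrightarrow> repl T p (sub T p) = T"
proof (induction p arbitrary: T)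
  case Nil then show ?case by simp
next
  case (Cons i p) then show ?case by (cases T) auto
qed

lemma valid_append: "valid T (p @ q) \<longleftrightarrow> valid T p \<and> valid (sub T p) q"
proof (induction p arbitrary: T)
  case Nil then show ?case by simp
next
  case (Cons i p) then show ?case by (cases T) auto
qed

lemma sub_append: "valid T p \<Longrightarrow> sub T (p @ q) = sub (sub T p) q"
proof (induction p arbitrary: T)
  case Nil then show ?case by simp
next
  case (Cons i p) then show ?case by (cases T) auto
qed

lemma nverts_repl: "valid T p \<Longrightarrow> nverts (repl T p S) + nverts (sub T p) = nverts T + nverts S"
proof (induction p arbitrary: T)
  case Nil then show ?case by simp
next
  case (Cons i p)
  obtain ts where T: "T = Node ts" by (cases T)
  have i: "i < length ts" and v: "valid (ts!i) p" using Cons.prems T by auto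
  have IH: "nverts (repl (ts!i) p S) + nverts (sub (ts!i) p) = nverts (ts!i) + nverts S"
    using Cons.IH v by blast
  have "sum_list ((map nverts ts)[i := nverts (repl (ts!i) p S)]) + (map nverts ts)!i
     = sum_list (map nverts ts) + nverts (repl (ts!i) p S)"
    by (rule sum_list_upd) (use i in simp)
  then show ?case using T i IH by (simp add: map_update)
qed

lemma twt_repl: "valid T p \<Longrightarrow> twt w (repl T p S) * twt w (sub T p) = twt w T * twt w S"
proof (induction p arbitrary: T)
  case Nil then show ?case by simp
next
  case (Cons i p)
  obtain ts where T: "T = Node ts" by (cases T)
  have i: "i < length ts" and v: "valid (ts!i) p" using Cons.prems T by auto
  have IH: "twt w (repl (ts!i) p S) * twt w (sub (ts!i) p) = twt w (ts!i) * twt w S"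
    using Cons.IH v by blast
  let ?xs = "map (twt w) ts"
  have e1: "prod_list (?xs[i := x]) = prod_list (take i ?xs @ drop (Suc i) ?xs) * x" for x
    using i by (simp add: upd_conv_take_nth_drop)
  have e2: "prod_list ?xs = prod_list (take i ?xs @ drop (Suc i) ?xs) * twt w (ts!i)"
    using e1[of "twt w (ts!i)"] i by (metis length_map list_update_id nth_map)
  show ?case using T i IH e1 e2 by (simp add: map_update algebra_simps)
qed

lemma rootdeg_repl_cons: "rootdeg (repl T (i#p) S) = rootdeg T"
  by (cases T) auto

lemma ptrees_finite: "finite (ptrees n)"
proof (induction n rule: less_induct)
  case (less n)
  show ?case
  proof (cases n)
    case 0
    have "nverts T \<noteq> 0" for T using nverts_pos[of T] by simp
    then have "ptrees 0 = {}" by (auto simp: ptrees_def)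
    then show ?thesis using 0 by simp
  next
    case (Suc m)
    let ?U = "\<Union>a\<le>m. ptrees a"
    have fU: "finite ?U" using less Suc by auto
    have "ptrees n \<subseteq> Node ` {ts. set ts \<subseteq> ?U \<and> length ts \<le> m}"
    proof
      fix T assume "T \<in> ptrees n"
      then obtain ts where T: "T = Node ts" and s: "1 + sum_list (map nverts ts) = n"
        by (cases T) (auto simp: ptrees_def)
      have le: "nverts t \<le> m" if "t \<in> set ts" for t
        using s Suc member_le_sum_list[of "nverts t" "map nverts ts"] that by auto
      have "length ts \<le> sum_list (map nverts ts)"
      proof (induction ts)
        case (Cons a ts) then show ?case using nverts_pos[of a] by simp
      qed simp
      then show "T \<in> Node ` {ts. set ts \<subseteq> ?U \<and> length ts \<le> m}"
        using T s Suc le by (auto simp: ptrees_def)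
    qed
    moreover have "finite {ts. set ts \<subseteq> ?U \<and> length ts \<le> m}"
      by (rule finite_lists_length_le[OF fU])
    ultimately show ?thesis by (meson finite_imageI finite_subset)
  qed
qed

definition PP :: "nat \<Rightarrow> (ptree \<times> ptree) set" where
  "PP n = {(T,T'). nverts T + nverts T' = n}"

lemma PP_eq: "PP n = (\<Union>a\<le>n. ptrees a \<times> ptrees (n - a))"
  by (auto simp: PP_def ptrees_def)

lemma PP_finite: "finite (PP n)"
  unfolding PP_eq using ptrees_finite by auto

lemma conv_PP:
  fixes f g :: "ptree \<Rightarrow> real"
  shows "(\<Sum>x\<in>PP n. f (fst x) * g (snd x)) =
    (\<Sum>a\<le>n. (\<Sum>T\<in>ptrees a. f T) * (\<Sum>T'\<in>ptrees (n-a). g T'))"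
proof -
  have "(\<Sum>x\<in>PP n. f (fst x) * g (snd x)) = (\<Sum>a\<le>n. \<Sum>x\<in>ptrees a \<times> ptrees (n - a). f (fst x) * g (snd x))"
    unfolding PP_eq
    by (rule sum.UNION_disjoint) (use ptrees_finite in \<open>auto simp: ptrees_def\<close>)
  also have "\<dots> = (\<Sum>a\<le>n. (\<Sum>T\<in>ptrees a. f T) * (\<Sum>T'\<in>ptrees (n-a). g T'))"
    by (simp add: sum_product sum.cartesian_product split_def)
  finally show ?thesis .
qed

lemma valid_repl0: "valid T p \<Longrightarrow> valid (repl T p S) p"
  using valid_repl[where q="[]"] by simp
lemma sub_repl0: "valid T p \<Longrightarrow> sub (repl T p S) p = S"
  using sub_repl[where q="[]"] by simp

lemma sum_Sigma':
  assumes "finite A" "\<And>x. x \<in> A \<Longrightarrow> finite (B x)"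
  shows "(\<Sum>x\<in>A. \<Sum>p\<in>B x. f x p) = (\<Sum>y\<in>Sigma A B. f (fst y) (snd y))"
  using sum.Sigma[of A B "\<lambda>x p. f x p"] assms by (simp add: split_def)

lemma I1:
  "(\<Sum>x\<in>PP n. (\<Sum>p\<in>{p\<in>pos (fst x). rootdeg (sub (fst x) p) = k}. twt w (fst x) * twt w (snd x))) =
   (\<Sum>x\<in>PP n. (\<Sum>p\<in>(if rootdeg (fst x) = k then pos (snd x) else {}). twt w (fst x) * twt w (snd x)))"
proof -
  let ?A = "Sigma (PP n) (\<lambda>x. {p\<in>pos (fst x). rootdeg (sub (fst x) p) = k})"
  let ?B = "Sigma (PP n) (\<lambda>x. if rootdeg (fst x) = k then pos (snd x) else {})"
  let ?h = "\<lambda>y. ((sub (fst (fst y)) (snd y), repl (fst (fst y)) (snd y) (snd (fst y))), snd y)"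
  let ?g = "\<lambda>y. ((repl (snd (fst y)) (snd y) (fst (fst y)), sub (snd (fst y)) (snd y)), snd y)"
  have bij: "bij_betw ?h ?A ?B"
  proof (rule bij_betw_byWitness[where f' = ?g])
    show "\<forall>x\<in>?A. ?g (?h x) = x"
      using sub_repl0 by (auto simp: pos_def repl_repl repl_sub)
    show "\<forall>y\<in>?B. ?h (?g y) = y"
      using sub_repl0 by (auto simp: pos_def repl_repl repl_sub split: if_splits)
    show "?h ` ?A \<subseteq> ?B"
    proof
      fix y assume "y \<in> ?h ` ?A"
      then obtain T1 T2 p where y: "y = ((sub T1 p, repl T1 p T2), p)" and
        h: "(T1,T2)\<in>PP n" "valid T1 p" "rootdeg (sub T1 p) = k" by (auto simp: pos_def)
      then show "y \<in> ?B" using valid_repl0[of T1 p T2] nverts_repl[of T1 p T2]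
        by (auto simp: pos_def PP_def)
    qed
    show "?g ` ?B \<subseteq> ?A"
    proof
      fix y assume "y \<in> ?g ` ?B"
      then obtain T3 T4 p where y: "y = ((repl T4 p T3, sub T4 p), p)" and
        h: "(T3,T4)\<in>PP n" "valid T4 p" "rootdeg T3 = k" by (auto simp: pos_def split: if_splits)
      then show "y \<in> ?A" using valid_repl0[of T4 p T3] nverts_repl[of T4 p T3] sub_repl0[of T4 p T3]
        by (auto simp: pos_def PP_def)
    qed
  qed
  have "(\<Sum>x\<in>PP n. (\<Sum>p\<in>{p\<in>pos (fst x). rootdeg (sub (fst x) p) = k}. twt w (fst x) * twt w (snd x)))
      = (\<Sum>y\<in>?A. twt w (fst (fst y)) * twt w (snd (fst y)))"
    by (rule sum_Sigma') (auto simp: PP_finite)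
  also have "\<dots> = (\<Sum>y\<in>?A. twt w (fst (fst (?h y))) * twt w (snd (fst (?h y))))"
  proof (rule sum.cong)
    fix x assume "x \<in> ?A"
    then show "twt w (fst (fst x)) * twt w (snd (fst x)) = twt w (fst (fst (?h x))) * twt w (snd (fst (?h x)))"
      using twt_repl by (auto simp: pos_def mult.commute)
  qed simp
  also have "\<dots> = (\<Sum>y\<in>?B. twt w (fst (fst y)) * twt w (snd (fst y)))"
    by (rule sum.reindex_bij_betw[OF bij])
  also have "\<dots> = (\<Sum>x\<in>PP n. (\<Sum>p\<in>(if rootdeg (fst x) = k then pos (snd x) else {}). twt w (fst x) * twt w (snd x)))"
    by (rule sum_Sigma'[symmetric]) (auto simp: PP_finite)
  finally show ?thesis .
qed

lemma valid_single: "valid T [i] \<longleftrightarrow> i < rootdeg T"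
  by (cases T) auto

lemma I2:
  "(\<Sum>x\<in>PP n. (\<Sum>p\<in>(if rootdeg (fst x) = k then pos (fst x) - {[]} else {}). twt w (fst x) * twt w (snd x))) =
   (\<Sum>x\<in>PP n. (\<Sum>p\<in>(if rootdeg (fst x) = k then {..<k} \<times> pos (snd x) else {}). twt w (fst x) * twt w (snd x)))"
proof -
  let ?A = "Sigma (PP n) (\<lambda>x. if rootdeg (fst x) = k then pos (fst x) - {[]} else {})"
  let ?B = "Sigma (PP n) (\<lambda>x. if rootdeg (fst x) = k then {..<k} \<times> pos (snd x) else {})"
  let ?h = "\<lambda>y. ((repl (fst (fst y)) [hd (snd y)] (snd (fst y)), sub (fst (fst y)) [hd (snd y)]), (hd (snd y), tl (snd y)))"
  let ?g = "\<lambda>y. ((repl (fst (fst y)) [fst (snd y)] (snd (fst y)), sub (fst (fst y)) [fst (snd y)]), fst (snd y) # snd (snd y))"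
  have bij: "bij_betw ?h ?A ?B"
  proof (rule bij_betw_byWitness[where f' = ?g])
    show "\<forall>x\<in>?A. ?g (?h x) = x"
    proof
      fix x assume "x \<in> ?A"
      then obtain T3 T2 i q where x: "x = ((T3,T2), i#q)" and v: "valid T3 (i#q)"
        by (cases x; cases "snd x") (auto simp: pos_def split: if_splits)
      have v1: "valid T3 [i]" using v valid_append[of T3 "[i]" q] by simp
      show "?g (?h x) = x" using x v1 by (simp add: repl_repl repl_sub sub_repl0)
    qed
    show "\<forall>y\<in>?B. ?h (?g y) = y"
    proof
      fix y assume "y \<in> ?B"
      then obtain T3 T4 i q where y: "y = ((T3,T4), (i,q))" and v: "i < rootdeg T3"
        by (cases y) (auto split: if_splits)
      have v1: "valid T3 [i]" using v valid_single by simp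
      show "?h (?g y) = y" using y v1 by (simp add: repl_repl repl_sub sub_repl0)
    qed
    show "?h ` ?A \<subseteq> ?B"
    proof
      fix y assume "y \<in> ?h ` ?A"
      then obtain T3 T2 i q where y: "y = ?h ((T3,T2), i#q)" and v: "valid T3 (i#q)"
        and P: "(T3,T2) \<in> PP n" and r: "rootdeg T3 = k"
        by (auto simp: pos_def split: if_splits)
      have v1: "valid T3 [i]" and vq: "valid (sub T3 [i]) q"
        using v valid_append[of T3 "[i]" q] by simp_all
      have "nverts (repl T3 [i] T2) + nverts (sub T3 [i]) = n"
        using nverts_repl[OF v1, of T2] P by (simp add: PP_def)
      then show "y \<in> ?B" using y v1 vq r rootdeg_repl_cons[of T3 i "[]" T2] valid_single
        by (auto simp: pos_def PP_def)
    qed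
    show "?g ` ?B \<subseteq> ?A"
    proof
      fix y assume "y \<in> ?g ` ?B"
      then obtain T3 T4 i q where y: "y = ?g ((T3,T4), (i,q))" and v: "i < k" and vq: "valid T4 q"
        and P: "(T3,T4) \<in> PP n" and r: "rootdeg T3 = k"
        by (auto simp: pos_def split: if_splits)
      have v1: "valid T3 [i]" using v r valid_single by simp
      have "nverts (repl T3 [i] T4) + nverts (sub T3 [i]) = n"
        using nverts_repl[OF v1, of T4] P by (simp add: PP_def)
      moreover have "valid (repl T3 [i] T4) (i#q)"
        using valid_repl[OF v1, of T4 q] vq by simp
      ultimately show "y \<in> ?A" using y r rootdeg_repl_cons[of T3 i "[]" T4]
        by (auto simp: pos_def PP_def)
    qed
  qed
  have "(\<Sum>x\<in>PP n. (\<Sum>p\<in>(if rootdeg (fst x) = k then pos (fst x) - {[]} else {}). twt w (fst x) * twt w (snd x)))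
      = (\<Sum>y\<in>?A. twt w (fst (fst y)) * twt w (snd (fst y)))"
    by (rule sum_Sigma') (auto simp: PP_finite)
  also have "\<dots> = (\<Sum>y\<in>?A. twt w (fst (fst (?h y))) * twt w (snd (fst (?h y))))"
  proof (rule sum.cong)
    fix x assume "x \<in> ?A"
    then obtain T3 T2 i q where x: "x = ((T3,T2), i#q)" and v: "valid T3 (i#q)"
      by (cases x; cases "snd x") (auto simp: pos_def split: if_splits)
    have v1: "valid T3 [i]" using v valid_append[of T3 "[i]" q] by simp
    show "twt w (fst (fst x)) * twt w (snd (fst x)) = twt w (fst (fst (?h x))) * twt w (snd (fst (?h x)))"
      using twt_repl[OF v1, of w T2] x by (simp add: mult.commute)
  qed simp
  also have "\<dots> = (\<Sum>y\<in>?B. twt w (fst (fst y)) * twt w (snd (fst y)))"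
    by (rule sum.reindex_bij_betw[OF bij])
  also have "\<dots> = (\<Sum>x\<in>PP n. (\<Sum>p\<in>(if rootdeg (fst x) = k then {..<k} \<times> pos (snd x) else {}). twt w (fst x) * twt w (snd x)))"
    by (rule sum_Sigma'[symmetric]) (auto simp: PP_finite)
  finally show ?thesis .
qed

lemma card_pos_minus: "card (pos T - {[]}) = nverts T - 1"
proof -
  have "[] \<in> pos T" by (simp add: pos_def)
  thus ?thesis using card_pos[of T] by (simp add: card_Diff_singleton)
qed

lemma real_nverts_minus: "real (nverts T - 1) = real (nverts T) - 1"
  using nverts_pos[of T] by (simp add: of_nat_diff)
lemma real_nverts_minus': "real (nverts T - Suc 0) = real (nverts T) - 1"
  using nverts_pos[of T] by (simp add: of_nat_diff)

lemma ptrees_0: "ptrees 0 = {}"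
proof -
  have "nverts T \<noteq> 0" for T using nverts_pos[of T] by simp
  then show ?thesis by (auto simp: ptrees_def)
qed

lemma ptrees_1: "ptrees 1 = {Node []}"
proof -
  have "T = Node []" if "nverts T = 1" for T
  proof -
    obtain ts where T: "T = Node ts" by (cases T)
    then have "sum_list (map nverts ts) = 0" using that by simp
    then have "ts = []"
    proof (cases ts)
      case (Cons a l) then show ?thesis using \<open>sum_list (map nverts ts) = 0\<close> nverts_pos[of a] by simp
    qed simp
    then show ?thesis using T by simp
  qed
  then show ?thesis by (auto simp: ptrees_def)
qed

lemma key_identity:
  fixes w :: "nat \<Rightarrow> real"
  assumes w0: "w 0 \<noteq> 0"
  shows "(\<Sum>T\<in>ptrees n. twt w T * (real k * real (Ncount k T))) =
     (real n - 1) * (\<Sum>T\<in>{T\<in>ptrees n. rootdeg T = k}. twt w T)"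
proof -
  define A where "A a = (\<Sum>T\<in>ptrees a. twt w T)" for a
  define B where "B a = (\<Sum>T\<in>ptrees a. twt w T * real (nverts T))" for a
  define M where "M a = (\<Sum>T\<in>ptrees a. twt w T * real (Ncount k T))" for a
  define R where "R a = (\<Sum>T\<in>ptrees a. if rootdeg T = k then twt w T else 0)" for a
  define Rm where "Rm a = (\<Sum>T\<in>ptrees a. if rootdeg T = k then twt w T * (real (nverts T) - 1) else 0)" for a
  define D where "D a = real k * M a - Rm a" for a
  have BA: "B b = real b * A b" for b
    unfolding A_def B_def sum_distrib_left by (rule sum.cong) (auto simp: ptrees_def)
  have e1: "(\<Sum>a\<le>n. M a * A (n - a)) = (\<Sum>a\<le>n. R a * B (n - a))" for n
  proof -
    have "(\<Sum>a\<le>n. M a * A (n - a)) =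
      (\<Sum>x\<in>PP n. (\<Sum>p\<in>{p\<in>pos (fst x). rootdeg (sub (fst x) p) = k}. twt w (fst x) * twt w (snd x)))"
      unfolding M_def A_def conv_PP[symmetric]
      by (rule sum.cong) (auto simp: Ncount_card)
    also have "\<dots> = (\<Sum>x\<in>PP n. (\<Sum>p\<in>(if rootdeg (fst x) = k then pos (snd x) else {}). twt w (fst x) * twt w (snd x)))"
      by (rule I1)
    also have "\<dots> = (\<Sum>a\<le>n. R a * B (n - a))"
      unfolding R_def B_def conv_PP[symmetric]
      by (rule sum.cong) (auto simp: card_pos)
    finally show ?thesis .
  qed
  have kR: "real k * R a = (\<Sum>T\<in>ptrees a. if rootdeg T = k then real k * twt w T else 0)" for a
    unfolding R_def sum_distrib_left by (rule sum.cong) auto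
  have e2: "(\<Sum>a\<le>n. Rm a * A (n - a)) = (\<Sum>a\<le>n. (real k * R a) * B (n - a))" for n
  proof -
    have "(\<Sum>a\<le>n. Rm a * A (n - a)) =
      (\<Sum>x\<in>PP n. (\<Sum>p\<in>(if rootdeg (fst x) = k then pos (fst x) - {[]} else {}). twt w (fst x) * twt w (snd x)))"
      unfolding Rm_def A_def conv_PP[symmetric]
      by (rule sum.cong) (auto simp: card_pos_minus real_nverts_minus real_nverts_minus')
    also have "\<dots> = (\<Sum>x\<in>PP n. (\<Sum>p\<in>(if rootdeg (fst x) = k then {..<k} \<times> pos (snd x) else {}). twt w (fst x) * twt w (snd x)))"
      by (rule I2)
    also have "\<dots> = (\<Sum>a\<le>n. (real k * R a) * B (n - a))"
      unfolding kR B_def conv_PP[symmetric]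
      by (rule sum.cong) (auto simp: card_pos card_cartesian_product)
    finally show ?thesis .
  qed
  have e3: "(\<Sum>a\<le>n. D a * A (n - a)) = 0" for n
  proof -
    have "(\<Sum>a\<le>n. D a * A (n - a)) = real k * (\<Sum>a\<le>n. M a * A (n - a)) - (\<Sum>a\<le>n. Rm a * A (n - a))"
      unfolding D_def by (simp add: sum_distrib_left sum_subtractf algebra_simps)
    also have "\<dots> = 0" unfolding e1 e2 by (simp add: sum_distrib_left algebra_simps)
    finally show ?thesis .
  qed
  have A0: "A 0 = 0" by (simp add: A_def ptrees_0)
  have A1: "A 1 = w 0" using ptrees_1 by (simp add: A_def)
  have D0: "D a = 0" for a
  proof (induction a rule: less_induct)
    case (less a)
    have "0 = (\<Sum>b\<le>Suc a. D b * A (Suc a - b))" using e3 by simp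
    also have "\<dots> = (\<Sum>b<a. D b * A (Suc a - b)) + D a * A 1"
      by (simp add: A0 lessThan_Suc_atMost[symmetric])
    also have "(\<Sum>b<a. D b * A (Suc a - b)) = 0" using less by simp
    finally show ?case using A1 w0 by simp
  qed
  have "real k * M n = Rm n" using D0[of n] by (simp add: D_def)
  also have "Rm n = (real n - 1) * R n"
    unfolding Rm_def R_def sum_distrib_left by (rule sum.cong) (auto simp: ptrees_def)
  finally have fin: "real k * M n = (real n - 1) * R n" .
  have R': "R n = (\<Sum>T\<in>{T\<in>ptrees n. rootdeg T = k}. twt w T)"
    unfolding R_def by (simp add: sum.inter_filter ptrees_finite)
  have M': "real k * M n = (\<Sum>T\<in>ptrees n. twt w T * (real k * real (Ncount k T)))"
    unfolding M_def sum_distrib_left by (simp add: algebra_simps)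
  show ?thesis using fin R' M' by simp
qed

lemma two_gen:
  fixes a b N :: nat
  assumes a: "a > 0" and b: "b > 0" and dv: "gcd a b dvd N" and le: "a*b \<le> N"
  shows "\<exists>x y. N = x*a + y*b"
proof -
  define d where "d = gcd a b"
  have d0: "d > 0" using a d_def by simp
  obtain x0 y0 where bz: "a*x0 = b*y0 + d" using bezout_nat[of a b] a d_def by auto
  obtain q where q: "N = d*q" using dv d_def by (auto elim: dvdE)
  obtain a' where a': "a = d*a'" using d_def by (metis gcd_dvd1 dvdE)
  obtain b' where b': "b = d*b'" using d_def by (metis gcd_dvd2 dvdE)
  have b'0: "b' > 0" using b b' by simp
  have a'le: "a' \<le> a" using a' d0 by simp
  define x where "x = (q*x0) mod b'"
  define t where "t = (q*x0) div b'"
  have qx: "q*x0 = b'*t + x" unfolding x_def t_def by simp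
  have xlt: "x < b'" unfolding x_def using b'0 by simp
  have "x*a < b'*a" using xlt a by simp
  also have "b'*a = a'*b" using a' b' by simp
  also have "a'*b \<le> a*b" using a'le by simp
  finally have "x*a < a*b" .
  then have xa: "x*a \<le> N" using le by linarith
  have "(b'*t + x)*a = q*(a*x0)" using qx by (metis mult.assoc mult.commute)
  also have "\<dots> = q*b*y0 + N" using bz q by (simp add: algebra_simps)
  finally have "x*a + t*(b'*a) = q*b*y0 + N" by (simp add: algebra_simps)
  then have e: "x*a + t*(a'*b) = q*b*y0 + N" using a' b' by (simp add: algebra_simps)
  have "(N - x*a) + (q*y0)*b = (t*a')*b" using e xa by (simp add: algebra_simps)
  then have "b dvd (N - x*a) + (q*y0)*b" by simp
  then have "b dvd (N - x*a)" by (simp add: dvd_add_left_iff)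
  then obtain y where "N - x*a = b*y" by (auto elim: dvdE)
  then have "N = x*a + y*b" using xa by (simp add: algebra_simps)
  then show ?thesis by blast
qed

locale addmon =
  fixes M :: "nat set"
  assumes zero: "0 \<in> M" and add: "x \<in> M \<Longrightarrow> y \<in> M \<Longrightarrow> x + y \<in> M"
begin

lemma mult_mem: "a \<in> M \<Longrightarrow> m * a \<in> M"
  by (induction m) (auto intro: zero add)

lemma finite_gcd:
  assumes "finite F" "F \<noteq> {}" "F \<subseteq> M" "0 \<notin> F"
  shows "\<exists>N0. \<forall>m\<ge>N0. Gcd F * m \<in> M"
  using assms
proof (induction F rule: finite_ne_induct)
  case (singleton a)
  then show ?case using mult_mem[of a] by (auto simp: mult.commute)
next
  case (insert b F)
  obtain N0 where N0: "\<forall>m\<ge>N0. Gcd F * m \<in> M" using insert by auto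
  obtain a where aF: "a \<in> F" using insert by auto
  have a0: "a \<noteq> 0"
  proof
    assume "a = 0" then show False using aF insert.prems(2) by auto
  qed
  have gF: "Gcd F > 0"
  proof (rule ccontr)
    assume "\<not> Gcd F > 0" then have "Gcd F = 0" by simp
    then show False using aF a0 by auto
  qed
  have b0: "b > 0" using insert.prems by (cases b) auto
  have bM: "b \<in> M" using insert by auto
  define t where "t = 1 + b*N0"
  have "N0 \<le> b*N0" using b0 by simp
  then have tN: "t \<ge> N0" unfolding t_def by linarith
  have cop: "coprime b t" unfolding t_def
    using gcd_add_mult[of b N0 1] by (simp add: coprime_iff_gcd_eq_1 mult.commute)
  define c where "c = Gcd F * t"
  have cM: "c \<in> M" using N0 tN c_def by auto
  have c0: "c > 0" unfolding c_def t_def using gF by simp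
  have gc: "gcd c b = gcd (Gcd F) b"
    unfolding c_def by (rule gcd_mult_left_right_cancel) (use cop in simp)
  have "Gcd (insert b F) * m \<in> M" if m: "m \<ge> c*b" for m
  proof -
    have gpos: "gcd b (Gcd F) \<ge> 1" using b0 by (simp add: Suc_le_eq)
    have "m \<le> gcd b (Gcd F) * m" using gpos by simp
    then have le: "c*b \<le> gcd b (Gcd F) * m" using m by linarith
    have dv: "gcd c b dvd gcd b (Gcd F) * m" using gc by (simp add: gcd.commute)
    obtain x y where "gcd b (Gcd F) * m = x*c + y*b"
      using two_gen[OF c0 b0 dv le] by blast
    moreover have "x*c + y*b \<in> M" by (rule add[OF mult_mem[OF cM] mult_mem[OF bM]])
    ultimately show ?thesis by simp
  qed
  then show ?case by blast
qed

lemma large_multiples: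
  assumes S: "S \<subseteq> M" "0 \<notin> S" "S \<noteq> {}"
  shows "\<exists>N0. \<forall>m\<ge>N0. Gcd S * m \<in> M"
proof -
  define G where "G = {e. \<exists>F. finite F \<and> F \<subseteq> S \<and> F \<noteq> {} \<and> e = Gcd F}"
  obtain s where s: "s \<in> S" using S by auto
  have sG: "Gcd {s} \<in> G" unfolding G_def using s by (intro CollectI exI[of _ "{s}"]) simp
  define d where "d = (LEAST e. e \<in> G)"
  have dG: "d \<in> G" unfolding d_def using sG by (rule LeastI)
  have dmin: "d \<le> e" if "e \<in> G" for e unfolding d_def using that by (rule Least_le)
  obtain F where F: "finite F" "F \<subseteq> S" "F \<noteq> {}" and dF: "d = Gcd F" using dG unfolding G_def by blast
  obtain a where aF: "a \<in> F" using F by auto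
  have a0: "a \<noteq> 0"
  proof
    assume "a = 0" then show False using aF F S by auto
  qed
  have d0: "d > 0"
  proof (rule ccontr)
    assume "\<not> d > 0" then have "Gcd F = 0" using dF by simp
    then show False using aF a0 by auto
  qed
  have "d dvd x" if x: "x \<in> S" for x
  proof -
    have "Gcd (insert x F) \<in> G" unfolding G_def using F x by (intro CollectI exI[of _ "insert x F"]) simp
    then have "d \<le> gcd x d" using dmin dF by simp
    moreover have "gcd x d \<le> d" using d0 by (simp add: gcd_le2_nat)
    ultimately have "gcd x d = d" by simp
    then show ?thesis using gcd_dvd1[of x d] by simp
  qed
  then have "d dvd Gcd S" by (simp add: Gcd_greatest)
  moreover have "Gcd S dvd d" unfolding dF using F(2) by (intro Gcd_greatest) (auto intro: Gcd_dvd)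
  ultimately have "Gcd S = d" by (simp add: dvd_antisym)
  moreover have "\<exists>N0. \<forall>m\<ge>N0. Gcd F * m \<in> M"
    by (rule finite_gcd) (use F S in auto)
  ultimately show ?thesis using dF by simp
qed

end

lemma twt_nonneg: "(\<And>k. 0 \<le> w k) \<Longrightarrow> 0 \<le> twt w T"
proof (induction T)
  case (Node ts)
  then show ?case by (auto intro!: prod_list_nonneg mult_nonneg_nonneg)
qed

fun chain :: "nat list \<Rightarrow> ptree" where
  "chain [] = Node []"
| "chain (d#ds) = Node (chain ds # replicate (d - 1) (Node []))"

lemma chain_props:
  assumes "\<forall>d\<in>set ds. d > 0 \<and> w d > 0" "w 0 > 0"
  shows "nverts (chain ds) = 1 + sum_list ds \<and> twt w (chain ds) > 0"
  using assms
proof (induction ds)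
  case Nil then show ?case by simp
next
  case (Cons d ds)
  have r: "sum_list (map nverts (replicate r (Node []))) = r" for r
    by (induction r) auto
  have "sum_list (map nverts (replicate (d - 1) (Node []))) = d - 1" by (rule r)
  moreover have "prod_list (map (twt w) (replicate (d - 1) (Node []))) = w 0 ^ (d - 1)"
    by (simp add: prod_list_replicate)
  moreover have "Suc (d - 1) = d" using Cons.prems by simp
  ultimately show ?case using Cons by auto
qed

lemma Z_pos_eventually:
  assumes w: "weight_seq w"
  shows "wspan w > 0 \<and> (\<exists>N0. \<forall>m\<ge>N0. (\<Sum>T\<in>ptrees (wspan w * m + 1). twt w T) > 0)"
proof -
  define S where "S = {d. d > 0 \<and> w d > 0}"
  define M where "M = {sum_list ds | ds. set ds \<subseteq> S}"
  have w0: "w 0 > 0" and wnn: "\<And>k. 0 \<le> w k" using w by (auto simp: weight_seq_def)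
  obtain k where k: "k \<ge> 2" "w k > 0" using w by (auto simp: weight_seq_def)
  have kS: "k \<in> S" using k by (auto simp: S_def)
  interpret addmon M
  proof
    show "0 \<in> M" unfolding M_def by (intro CollectI exI[of _ "[]"]) simp
    fix x y assume "x \<in> M" "y \<in> M"
    then obtain xs ys where "x = sum_list xs" "set xs \<subseteq> S" "y = sum_list ys" "set ys \<subseteq> S"
      unfolding M_def by blast
    then show "x + y \<in> M" unfolding M_def by (intro CollectI exI[of _ "xs @ ys"]) simp
  qed
  have SM: "S \<subseteq> M" unfolding M_def by (auto intro!: exI[of _ "[x]" for x])
  have S0: "0 \<notin> S" by (simp add: S_def)
  have "{i. 0 < w i} = insert 0 S" using w0 by (auto simp: S_def)
  then have g: "wspan w = Gcd S" by (simp add: wspan_def)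
  have gpos: "wspan w > 0"
  proof (rule ccontr)
    assume "\<not> wspan w > 0" then have "Gcd S = 0" using g by simp
    then show False using kS k by auto
  qed
  obtain N0 where N0: "\<forall>m\<ge>N0. Gcd S * m \<in> M"
    using large_multiples[OF SM S0] kS by blast
  have "(\<Sum>T\<in>ptrees (wspan w * m + 1). twt w T) > 0" if m: "m \<ge> N0" for m
  proof -
    obtain ds where ds: "wspan w * m = sum_list ds" "set ds \<subseteq> S" using N0 m g unfolding M_def by auto
    have "\<forall>d\<in>set ds. d > 0 \<and> w d > 0" using ds S_def by auto
    then have c: "nverts (chain ds) = 1 + sum_list ds" "twt w (chain ds) > 0"
      using chain_props[of ds w] w0 by auto
    have "chain ds \<in> ptrees (wspan w * m + 1)" using c ds by (simp add: ptrees_def)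
    then show ?thesis
      by (rule sum_pos2[OF ptrees_finite]) (use c twt_nonneg wnn in auto)
  qed
  then show ?thesis using gpos by blast
qed

lemma tprob_if: "tprob w n P = (\<Sum>T\<in>ptrees n. if P T then twt w T else 0) / (\<Sum>T\<in>ptrees n. twt w T)"
  unfolding tprob_def by (simp add: sum.inter_filter ptrees_finite)

lemma tprob_split: "tprob w n P = tprob w n (\<lambda>T. P T \<and> Q T) + tprob w n (\<lambda>T. P T \<and> \<not> Q T)"
  unfolding tprob_if add_divide_distrib[symmetric] sum.distrib[symmetric]
  by (rule arg_cong2[where f="(/)"], rule sum.cong) auto

lemma tprob_compl: "(\<Sum>T\<in>ptrees n. twt w T) > 0 \<Longrightarrow> tprob w n P = 1 - tprob w n (\<lambda>T. \<not> P T)"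
proof -
  assume Z: "(\<Sum>T\<in>ptrees n. twt w T) > 0"
  have "tprob w n P + tprob w n (\<lambda>T. \<not> P T) = (\<Sum>T\<in>ptrees n. twt w T) / (\<Sum>T\<in>ptrees n. twt w T)"
    unfolding tprob_if add_divide_distrib[symmetric] sum.distrib[symmetric]
    by (rule arg_cong2[where f="(/)"], rule sum.cong) auto
  then show ?thesis using Z by simp
qed

lemma tprob_mono:
  assumes "\<And>k. 0 \<le> w k" "\<And>T. T \<in> ptrees n \<Longrightarrow> P T \<Longrightarrow> Q T"
  shows "tprob w n P \<le> tprob w n Q"
  unfolding tprob_if
  by (rule divide_right_mono, rule sum_mono) (use assms twt_nonneg in \<open>auto intro: sum_nonneg\<close>)

lemma tprob_nonneg: "(\<And>k. 0 \<le> w k) \<Longrightarrow> 0 \<le> tprob w n P"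
  unfolding tprob_if using twt_nonneg by (auto intro!: divide_nonneg_nonneg sum_nonneg)

lemma rootdeg_lt: "rootdeg T < nverts T"
proof (cases T)
  case (Node ts)
  have "length ts \<le> sum_list (map nverts ts)"
  proof (induction ts)
    case (Cons a ts) then show ?case using nverts_pos[of a] by simp
  qed simp
  then show ?thesis using Node by simp
qed

lemma Ncount_root: "Ncount (rootdeg T) T \<ge> 1"
  by (cases T) auto

lemma H_ge_root:
  assumes "Om < rootdeg T"
  shows "real (rootdeg T) \<le> (\<Sum>k\<in>{Om<..nverts T}. real k * real (Ncount k T))"
proof -
  have "real (rootdeg T) \<le> real (rootdeg T) * real (Ncount (rootdeg T) T)"
    using Ncount_root[of T] by (simp add: mult_le_cancel_left1)
  also have "\<dots> \<le> (\<Sum>k\<in>{Om<..nverts T}. real k * real (Ncount k T))"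
    by (rule member_le_sum[where f="\<lambda>k. real k * real (Ncount k T)"]) (use assms rootdeg_lt[of T] in auto)
  finally show ?thesis .
qed

lemma H_nonneg: "0 \<le> (\<Sum>k\<in>{Om<..nverts T}. real k * real (Ncount k T))"
  by (auto intro: sum_nonneg)

lemma EH:
  fixes w :: "nat \<Rightarrow> real"
  assumes w0: "w 0 \<noteq> 0"
  shows "(\<Sum>T\<in>ptrees n. twt w T * (\<Sum>k\<in>{Om<..nverts T}. real k * real (Ncount k T))) =
    (real n - 1) * (\<Sum>T\<in>{T\<in>ptrees n. Om < rootdeg T}. twt w T)"
proof -
  have "(\<Sum>T\<in>ptrees n. twt w T * (\<Sum>k\<in>{Om<..nverts T}. real k * real (Ncount k T))) =
     (\<Sum>T\<in>ptrees n. \<Sum>k\<in>{Om<..n}. twt w T * (real k * real (Ncount k T)))"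
    by (rule sum.cong) (auto simp: ptrees_def sum_distrib_left)
  also have "\<dots> = (\<Sum>k\<in>{Om<..n}. \<Sum>T\<in>ptrees n. twt w T * (real k * real (Ncount k T)))"
    by (rule sum.swap)
  also have "\<dots> = (\<Sum>k\<in>{Om<..n}. (real n - 1) * (\<Sum>T\<in>{T\<in>ptrees n. rootdeg T = k}. twt w T))"
    using key_identity[of w, OF w0] by simp
  also have "\<dots> = (real n - 1) * (\<Sum>k\<in>{Om<..n}. \<Sum>T\<in>ptrees n. if rootdeg T = k then twt w T else 0)"
    by (simp add: sum_distrib_left sum.inter_filter ptrees_finite)
  also have "(\<Sum>k\<in>{Om<..n}. \<Sum>T\<in>ptrees n. if rootdeg T = k then twt w T else 0) =
      (\<Sum>T\<in>ptrees n. \<Sum>k\<in>{Om<..n}. if rootdeg T = k then twt w T else 0)"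
    by (rule sum.swap)
  also have "\<dots> = (\<Sum>T\<in>ptrees n. if Om < rootdeg T then twt w T else 0)"
  proof (rule sum.cong)
    fix T assume T: "T \<in> ptrees n"
    have "rootdeg T \<le> n" using rootdeg_lt[of T] T by (simp add: ptrees_def)
    then show "(\<Sum>k\<in>{Om<..n}. if rootdeg T = k then twt w T else 0) = (if Om < rootdeg T then twt w T else 0)"
      by (simp add: sum.delta)
  qed simp
  also have "\<dots> = (\<Sum>T\<in>{T\<in>ptrees n. Om < rootdeg T}. twt w T)"
    by (simp add: sum.inter_filter ptrees_finite)
  finally show ?thesis .
qed

lemma diag:
  assumes "\<And>j::nat. \<exists>N. \<forall>m\<ge>N. P j m"
  shows "\<exists>J::nat \<Rightarrow> nat. filterlim J at_top sequentially \<and> eventually (\<lambda>m. P (J m) m) sequentially"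
proof -
  obtain N where N: "\<And>j m. m \<ge> N j \<Longrightarrow> P j m" using assms by metis
  define N' where "N' j = (\<Sum>i\<le>j. N i) + j" for j
  have N'N: "N j \<le> N' j" for j unfolding N'_def
    using member_le_sum[of j "{..j}" N] by simp
  have N'j: "j \<le> N' j" for j unfolding N'_def by simp
  define J where "J m = Max {j. N' j \<le> m}" for m
  have fin: "finite {j. N' j \<le> m}" for m
    by (rule finite_subset[of _ "{..m}"]) (use N'j in \<open>auto intro: le_trans\<close>)
  have Jin: "N' (J m) \<le> m" if "m \<ge> N' 0" for m
  proof -
    have "{j. N' j \<le> m} \<noteq> {}" using that by auto
    then show ?thesis unfolding J_def using Max_in[OF fin] by blast
  qed
  have Jge: "J m \<ge> j0" if "m \<ge> N' j0" for m j0
    unfolding J_def using that fin by (intro Max_ge) auto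
  have "filterlim J at_top sequentially"
    unfolding filterlim_at_top using Jge by (auto simp: eventually_sequentially)
  moreover have "eventually (\<lambda>m. P (J m) m) sequentially"
    unfolding eventually_sequentially using Jin N N'N le_trans by blast
  ultimately show ?thesis by blast
qed

lemma inv_lim:
  assumes "filterlim (J :: 'a \<Rightarrow> nat) at_top F"
  shows "((\<lambda>x. 1 / (real (J x) + 1)) \<longlongrightarrow> 0) F"
proof -
  have "filterlim (\<lambda>x. real (J x)) at_top F"
    by (rule filterlim_compose[OF filterlim_real_sequentially assms])
  then have "filterlim (\<lambda>x. 1 + real (J x)) at_top F"
    by (rule filterlim_tendsto_add_at_top[OF tendsto_const])
  from tendsto_inverse_0_at_top[OF this] show ?thesis
    by (simp add: inverse_eq_divide add.commute)
qed

theorem lemma6p3: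
  fixes \<omega> :: "nat \<Rightarrow> real" and \<mu> :: real and \<Omega> :: "nat \<Rightarrow> nat"
  assumes w: "weight_seq \<omega>"
    and wtype: "typeII_nu \<omega> \<mu> \<or> (typeIII \<omega> \<and> \<mu> = 0)"
    and Om_inf: "filterlim \<Omega> at_top sequentially"
    and Om_small: "(\<lambda>n. real (\<Omega> n) / real n) \<longlonglongrightarrow> 0"
    and Om_low: "\<And>K::nat \<Rightarrow> nat. filterlim K at_top sequentially \<Longrightarrow> (\<forall>n. K n \<le> \<Omega> n) \<Longrightarrow>
        (\<forall>\<epsilon>>0. (\<lambda>m. tprob \<omega> (wspan \<omega> * m + 1)
            (\<lambda>T. \<bar>(\<Sum>k\<le>K (wspan \<omega> * m + 1). real k * real (Ncount k T))
                   - \<mu> * real (wspan \<omega> * m + 1)\<bar> > \<epsilon> * real (wspan \<omega> * m + 1)))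
          \<longlonglongrightarrow> 0)"
    and Om_high: "\<And>K::nat \<Rightarrow> nat. filterlim K at_top sequentially \<Longrightarrow> (\<forall>n. K n \<le> \<Omega> n) \<Longrightarrow>
        (\<forall>\<epsilon>>0. (\<lambda>m. tprob \<omega> (wspan \<omega> * m + 1)
            (\<lambda>T. \<bar>(\<Sum>k\<in>{K (wspan \<omega> * m + 1)<..nverts T}. real k * real (Ncount k T))
                   - (1 - \<mu>) * real (wspan \<omega> * m + 1)\<bar> > \<epsilon> * real (wspan \<omega> * m + 1)))
          \<longlonglongrightarrow> 0)"
  shows "\<exists>t::nat \<Rightarrow> real. t \<longlonglongrightarrow> 0 \<and>
    (\<lambda>m. let n = wspan \<omega> * m + 1 in
        tprob \<omega> n (\<lambda>T. \<Omega> n < rootdeg T \<and> real (rootdeg T) \<le> (1 - \<mu> + t n) * real n)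
        / tprob \<omega> n (\<lambda>T. \<Omega> n < rootdeg T)) \<longlonglongrightarrow> 1"
proof -
  have w0: "\<omega> 0 > 0" and wnn: "\<And>k. 0 \<le> \<omega> k" using w by (auto simp: weight_seq_def)
  have mu1: "\<mu> < 1"
  proof (cases "typeII_nu \<omega> \<mu>")
    case True then show ?thesis unfolding typeII_nu_def by (elim conjE)
  next
    case False then show ?thesis using wtype by simp
  qed
  define g where "g = wspan \<omega>"
  have Zp: "g > 0 \<and> (\<exists>N0. \<forall>m\<ge>N0. (\<Sum>T\<in>ptrees (g * m + 1). twt \<omega> T) > 0)"
    unfolding g_def by (rule Z_pos_eventually[OF w])
  have gpos: "g > 0" using Zp by (rule conjunct1)
  obtain N0 where N0': "\<forall>m\<ge>N0. (\<Sum>T\<in>ptrees (g * m + 1). twt \<omega> T) > 0"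
    using Zp by (elim conjE exE)
  have N0: "(\<Sum>T\<in>ptrees (g * m + 1). twt \<omega> T) > 0" if "m \<ge> N0" for m
    using N0' that by simp
  define nn where "nn m = g * m + 1" for m
  define H where "H n T = (\<Sum>k\<in>{\<Omega> n<..nverts T}. real k * real (Ncount k T))" for n T
  define f where "f \<epsilon> m = tprob \<omega> (nn m) (\<lambda>T. \<bar>H (nn m) T - (1 - \<mu>) * real (nn m)\<bar> > \<epsilon> * real (nn m))" for \<epsilon> m
  have hi: "\<And>\<epsilon>. \<epsilon> > 0 \<Longrightarrow> (\<lambda>m. f \<epsilon> m) \<longlonglongrightarrow> 0"
    using Om_high[OF Om_inf] unfolding f_def H_def nn_def g_def by auto
  define q where "q m = tprob \<omega> (nn m) (\<lambda>T. \<Omega> (nn m) < rootdeg T)" for m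
  define c where "c = (1 - \<mu>) / 2"
  have c0: "c > 0" using mu1 by (simp add: c_def)
  have low: "q m \<ge> c / 2" if m: "m \<ge> max N0 1" and fc: "f c m < 1/2" for m
  proof -
    define n where "n = nn m"
    have Z: "(\<Sum>T\<in>ptrees n. twt \<omega> T) > 0" using N0 m by (simp add: n_def nn_def)
    have "m \<ge> 1" using m by simp
    then have "1 \<le> g * m" using gpos by (simp add: Suc_le_eq)
    then have "n \<ge> 2" by (simp add: n_def nn_def)
    then have n2: "real n \<ge> 2" by simp
    define G where "G T = (\<not> \<bar>H n T - (1 - \<mu>) * real n\<bar> > c * real n)" for T
    define Zs where "Zs = (\<Sum>T\<in>ptrees n. twt \<omega> T)"
    have tG: "tprob \<omega> n G = 1 - f c m"
      using tprob_compl[OF Z, of G] unfolding G_def f_def n_def by simp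
    have "(\<Sum>T\<in>ptrees n. if G T then twt \<omega> T * (c * real n) else 0) \<le> (\<Sum>T\<in>ptrees n. twt \<omega> T * H n T)"
    proof (rule sum_mono)
      fix T assume "T \<in> ptrees n"
      have Hn: "0 \<le> H n T" unfolding H_def by (rule H_nonneg)
      have tw: "0 \<le> twt \<omega> T" using twt_nonneg wnn by blast
      show "(if G T then twt \<omega> T * (c * real n) else 0) \<le> twt \<omega> T * H n T"
      proof (cases "G T")
        case True
        then have "\<bar>H n T - (1 - \<mu>) * real n\<bar> \<le> c * real n" unfolding G_def by simp
        then have "(1 - \<mu>) * real n - H n T \<le> c * real n" by (simp add: abs_le_iff)
        moreover have "(1 - \<mu>) * real n = 2 * (c * real n)" by (simp add: c_def)
        ultimately have "c * real n \<le> H n T" by linarith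
        then show ?thesis using True tw by (simp add: mult_left_mono)
      qed (use Hn tw in simp)
    qed
    also have "\<dots> = (real n - 1) * (\<Sum>T\<in>{T\<in>ptrees n. \<Omega> n < rootdeg T}. twt \<omega> T)"
      unfolding H_def by (rule EH) (use w0 in simp)
    also have "\<dots> = (real n - 1) * (q m * Zs)"
      using Z by (simp add: q_def tprob_def n_def Zs_def)
    finally have A0: "(\<Sum>T\<in>ptrees n. if G T then twt \<omega> T * (c * real n) else 0) \<le> (real n - 1) * (q m * Zs)" .
    have "tprob \<omega> n G * Zs = (\<Sum>T\<in>ptrees n. if G T then twt \<omega> T else 0)"
      using Z unfolding tprob_if Zs_def by simp
    moreover have "(c * real n) * (\<Sum>T\<in>ptrees n. if G T then twt \<omega> T else 0) =
       (\<Sum>T\<in>ptrees n. if G T then twt \<omega> T * (c * real n) else 0)"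
      unfolding sum_distrib_left by (rule sum.cong) auto
    ultimately have A: "(c * real n) * (tprob \<omega> n G * Zs) \<le> (real n - 1) * (q m * Zs)"
      using A0 by simp
    have "tprob \<omega> n G \<ge> 1/2" using tG fc by simp
    then have "(c * real n) * (1/2) \<le> (c * real n) * tprob \<omega> n G"
      using c0 n2 by (intro mult_left_mono) auto
    also have "\<dots> \<le> (real n - 1) * q m" using A Z Zs_def
      by (simp add: mult.assoc[symmetric])
    finally have "(c * real n) * (1/2) \<le> (real n - 1) * q m" .
    moreover have "(c/2) * (real n - 1) \<le> (c * real n) * (1/2)" using c0 by (simp add: field_simps)
    ultimately have "(c/2) * (real n - 1) \<le> q m * (real n - 1)" by (simp add: mult.commute)
    then show ?thesis using n2 by (simp add: mult_le_cancel_right)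
  qed
  have "eventually (\<lambda>m. f c m < 1/2) sequentially"
    using hi[OF c0] by (rule order_tendstoD) simp
  then have lowE: "eventually (\<lambda>m. q m \<ge> c/2) sequentially"
    using eventually_ge_at_top[of "max N0 1"] by eventually_elim (use low in blast)
  have "\<exists>N. \<forall>m\<ge>N. f (1 / (real j + 1)) m < 1 / (real j + 1)" for j :: nat
  proof -
    have "(\<lambda>m. f (1 / (real j + 1)) m) \<longlonglongrightarrow> 0" by (rule hi) simp
    then have "eventually (\<lambda>m. f (1 / (real j + 1)) m < 1 / (real j + 1)) sequentially"
      by (rule order_tendstoD) simp
    then show ?thesis by (simp add: eventually_sequentially)
  qed
  then obtain J where J: "filterlim J at_top sequentially"
    and JP: "eventually (\<lambda>m. f (1 / (real (J m) + 1)) m < 1 / (real (J m) + 1)) sequentially"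
    using diag[where P="\<lambda>j m. f (1 / (real j + 1)) m < 1 / (real j + 1)"] by blast
  define t where "t n = 1 / (real (J ((n - 1) div g)) + 1)" for n
  have lim1: "filterlim (\<lambda>n. (n - 1) div g) at_top sequentially"
    unfolding filterlim_at_top eventually_sequentially
  proof (intro allI exI[of _ "g * _ + 1"] impI)
    fix Z n :: nat assume "g * Z + 1 \<le> n"
    then have "(g * Z) div g \<le> (n - 1) div g" by (intro div_le_mono) simp
    then show "Z \<le> (n - 1) div g" using gpos by simp
  qed
  have tlim: "t \<longlonglongrightarrow> 0" unfolding t_def
    by (rule inv_lim[OF filterlim_compose[OF J lim1]])
  have tnn: "t (nn m) = 1 / (real (J m) + 1)" for m using gpos by (simp add: t_def nn_def)
  have elim: "(\<lambda>m. 1 / (real (J m) + 1)) \<longlonglongrightarrow> 0" by (rule inv_lim[OF J])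
  define b where "b m = tprob \<omega> (nn m) (\<lambda>T. \<Omega> (nn m) < rootdeg T \<and>
      \<not> real (rootdeg T) \<le> (1 - \<mu> + t (nn m)) * real (nn m))" for m
  have bnn: "0 \<le> b m" for m unfolding b_def by (rule tprob_nonneg[OF wnn])
  have bf: "b m \<le> f (1 / (real (J m) + 1)) m" for m
    unfolding b_def f_def tnn
  proof (rule tprob_mono[OF wnn])
    fix T assume T: "T \<in> ptrees (nn m)" and P: "\<Omega> (nn m) < rootdeg T \<and>
      \<not> real (rootdeg T) \<le> (1 - \<mu> + 1 / (real (J m) + 1)) * real (nn m)"
    have "real (rootdeg T) \<le> H (nn m) T" unfolding H_def
      using H_ge_root[of "\<Omega> (nn m)" T] P by simp
    then have h1: "(1 - \<mu> + 1 / (real (J m) + 1)) * real (nn m) < H (nn m) T" using P by linarith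
    have "(1 - \<mu> + 1 / (real (J m) + 1)) * real (nn m) = (1 - \<mu>) * real (nn m) + 1 / (real (J m) + 1) * real (nn m)"
      by (simp add: algebra_simps)
    then have "1 / (real (J m) + 1) * real (nn m) < H (nn m) T - (1 - \<mu>) * real (nn m)" using h1 by linarith
    then show "1 / (real (J m) + 1) * real (nn m) < \<bar>H (nn m) T - (1 - \<mu>) * real (nn m)\<bar>"
      using abs_ge_self[of "H (nn m) T - (1 - \<mu>) * real (nn m)"] by linarith
  qed
  have ratio: "eventually (\<lambda>m. (let n = wspan \<omega> * m + 1 in
        tprob \<omega> n (\<lambda>T. \<Omega> n < rootdeg T \<and> real (rootdeg T) \<le> (1 - \<mu> + t n) * real n)
        / tprob \<omega> n (\<lambda>T. \<Omega> n < rootdeg T)) = 1 - b m / q m) sequentially"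
    using lowE
  proof eventually_elim
    case (elim m)
    have qpos: "q m > 0" using elim c0 by linarith
    define a where "a = tprob \<omega> (nn m) (\<lambda>T. \<Omega> (nn m) < rootdeg T \<and> real (rootdeg T) \<le> (1 - \<mu> + t (nn m)) * real (nn m))"
    have qs: "q m = a + b m"
      unfolding a_def q_def b_def by (rule tprob_split)
    have l: "(let n = wspan \<omega> * m + 1 in
        tprob \<omega> n (\<lambda>T. \<Omega> n < rootdeg T \<and> real (rootdeg T) \<le> (1 - \<mu> + t n) * real n)
        / tprob \<omega> n (\<lambda>T. \<Omega> n < rootdeg T)) = a / q m"
      unfolding Let_def a_def q_def nn_def g_def by (rule refl)
    have "a / q m = 1 - b m / q m" using qpos qs by (simp add: field_simps)
    then show ?case using l by simp
  qed
  have "(\<lambda>m. b m / q m) \<longlonglongrightarrow> 0"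
  proof (rule tendsto_sandwich[where f="\<lambda>_. 0" and h="\<lambda>m. (2 / c) * (1 / (real (J m) + 1))"])
    show "eventually (\<lambda>m. 0 \<le> b m / q m) sequentially"
      using lowE by eventually_elim (use bnn c0 in \<open>auto intro: divide_nonneg_pos\<close>)
    show "eventually (\<lambda>m. b m / q m \<le> (2 / c) * (1 / (real (J m) + 1))) sequentially"
      using lowE JP
    proof eventually_elim
      case (elim m)
      have qpos: "q m > 0" using elim c0 by linarith
      have "b m / q m \<le> b m / (c / 2)" using elim bnn c0 by (intro divide_left_mono) auto
      also have "\<dots> \<le> (1 / (real (J m) + 1)) / (c / 2)"
        using bf[of m] elim c0 by (intro divide_right_mono) auto
      finally show ?case by (simp add: field_simps)
    qed
    show "(\<lambda>_. 0::real) \<longlonglongrightarrow> 0" by simp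
    show "(\<lambda>m. (2 / c) * (1 / (real (J m) + 1))) \<longlonglongrightarrow> 0"
      by (rule tendsto_mult_right_zero[OF elim])
  qed
  then have "(\<lambda>m. 1 - b m / q m) \<longlonglongrightarrow> 1 - 0" by (intro tendsto_diff tendsto_const)
  then have "(\<lambda>m. (let n = wspan \<omega> * m + 1 in
        tprob \<omega> n (\<lambda>T. \<Omega> n < rootdeg T \<and> real (rootdeg T) \<le> (1 - \<mu> + t n) * real n)
        / tprob \<omega> n (\<lambda>T. \<Omega> n < rootdeg T))) \<longlonglongrightarrow> 1"
    using tendsto_cong[OF ratio] by simp
  then show ?thesis using tlim by blast
qed

end
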